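(* Let $F$ be an indexed group with degree map $\deg: F\to\mathbb{Z}$, let $\varphi: F\to G$ be a homomorphism to a group $G$, let $f_1\in F$ have degree one, and let $g\in G$. Then: 1) there exists a homomorphism $\psi: F\to G$ with $\psi(f)=\varphi(f)$ for all $f$ of degree zero and $\psi(f_1)=\varphi(f_1)g$ if and only if $g$ lies in the centraliser $C(\varphi(\ker\deg))$; and such $\psi$, when it exists, is unique; 2) if $H$ is a subgroup of $G$ and $g\in H_\varphi$, then (the homomorphism $\psi$ from 1) exists and) $\psi(f)H=\varphi(f)H$ for all $f\in F$.
   Context: An indexed group is a group $F$ equipped with a surjective homomorphism $\deg: F\to\mathbb{Z}$. For $x,y$ in a group, $x^y=y^{-1}xy$ and $H^y=y^{-1}Hy$; $C(X)$ is the centraliser of $X$. For a subgroup $H\le G$, the $\varphi$-core of $H$ is $H_\varphi=\bigcap_{f\in F}H^{\varphi(f)}\cap C(\{\varphi(f)\mid\deg f=0\})$. *)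

theory Defs
  imports "HOL-Algebra.Algebra"
begin

definition centraliser :: "('a, 'b) monoid_scheme \<Rightarrow> 'a set \<Rightarrow> 'a set" where
  "centraliser G S = {c \<in> carrier G. \<forall>x\<in>S. monoid.mult G c x = monoid.mult G x c}"

definition conj_subgroup :: "('a, 'b) monoid_scheme \<Rightarrow> 'a set \<Rightarrow> 'a \<Rightarrow> 'a set" where
  "conj_subgroup G H y = {monoid.mult G (monoid.mult G (m_inv G y) h) y | h. h \<in> H}"

definition indexed_group :: "('c, 'd) monoid_scheme \<Rightarrow> ('c \<Rightarrow> int) \<Rightarrow> bool" where
  "indexed_group F dg \<longleftrightarrow> group F \<and> dg \<in> hom F integer_group \<and> dg ` carrier F = UNIV"

definition phi_core ::
  "('c, 'd) monoid_scheme \<Rightarrow> ('c \<Rightarrow> int) \<Rightarrow> ('a, 'b) monoid_scheme \<Rightarrow> ('c \<Rightarrow> 'a) \<Rightarrow> 'a set \<Rightarrow> 'a set" where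
  "phi_core F dg G \<phi> H =
     (\<Inter>f\<in>carrier F. conj_subgroup G H (\<phi> f))
     \<inter> centraliser G {\<phi> f | f. f \<in> carrier F \<and> dg f = 0}"

end

theory Submission
  imports Defs begin

lemma (in group) conj_pow_nat:
  assumes S: "S \<subseteq> carrier G" and cd: "c \<in> carrier G" "d \<in> carrier G"
    and eq: "\<forall>x\<in>S. c \<otimes> x \<otimes> inv c = d \<otimes> x \<otimes> inv d"
    and cl: "\<forall>x\<in>S. d \<otimes> x \<otimes> inv d \<in> S"
  shows "\<forall>x\<in>S. c [^] (n::nat) \<otimes> x \<otimes> inv (c [^] n) = d [^] n \<otimes> x \<otimes> inv (d [^] n)"
proof (induction n)
  case 0
  then show ?case using S by auto
next
  case (Suc n)
  show ?case
  proof
    fix x assume x: "x \<in> S"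
    hence xc: "x \<in> carrier G" using S by auto
    have "c [^] Suc n \<otimes> x \<otimes> inv (c [^] Suc n) = c [^] n \<otimes> (c \<otimes> x \<otimes> inv c) \<otimes> inv (c [^] n)"
      using cd xc by (simp add: m_assoc inv_mult_group)
    also have "\<dots> = c [^] n \<otimes> (d \<otimes> x \<otimes> inv d) \<otimes> inv (c [^] n)" using eq x by simp
    also have "\<dots> = d [^] n \<otimes> (d \<otimes> x \<otimes> inv d) \<otimes> inv (d [^] n)" using Suc.IH cl x by blast
    also have "\<dots> = d [^] Suc n \<otimes> x \<otimes> inv (d [^] Suc n)"
      using cd xc by (simp add: m_assoc inv_mult_group)
    finally show "c [^] Suc n \<otimes> x \<otimes> inv (c [^] Suc n) = d [^] Suc n \<otimes> x \<otimes> inv (d [^] Suc n)" .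
  qed
qed

lemma (in group) conj_pow_int:
  assumes S: "S \<subseteq> carrier G" and bg: "b \<in> carrier G" "g \<in> carrier G"
    and cent: "\<forall>x\<in>S. g \<otimes> x = x \<otimes> g"
    and cl1: "\<forall>x\<in>S. b \<otimes> x \<otimes> inv b \<in> S"
    and cl2: "\<forall>x\<in>S. inv b \<otimes> x \<otimes> b \<in> S"
    and x: "x \<in> S"
  shows "(b \<otimes> g) [^] (n::int) \<otimes> x \<otimes> inv ((b \<otimes> g) [^] n) = b [^] n \<otimes> x \<otimes> inv (b [^] n)"
proof -
  have gx: "\<And>x. x \<in> S \<Longrightarrow> g \<otimes> x \<otimes> inv g = x"
  proof -
    fix x assume x: "x \<in> S" hence xc: "x \<in> carrier G" using S by auto
    have "g \<otimes> x \<otimes> inv g = x \<otimes> g \<otimes> inv g" using cent x by simp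
    also have "\<dots> = x" using xc bg by (simp add: m_assoc)
    finally show "g \<otimes> x \<otimes> inv g = x" .
  qed
  have gx': "\<And>x. x \<in> S \<Longrightarrow> inv g \<otimes> x \<otimes> g = x"
  proof -
    fix x assume x: "x \<in> S" hence xc: "x \<in> carrier G" using S by auto
    have "inv g \<otimes> x \<otimes> g = inv g \<otimes> (g \<otimes> x)" using cent x xc bg by (simp add: m_assoc)
    also have "\<dots> = x" using xc bg by (simp add: m_assoc[symmetric])
    finally show "inv g \<otimes> x \<otimes> g = x" .
  qed
  have e1: "\<forall>x\<in>S. (b \<otimes> g) \<otimes> x \<otimes> inv (b \<otimes> g) = b \<otimes> x \<otimes> inv b"
  proof
    fix x assume "x \<in> S"
    hence xc: "x \<in> carrier G" using S by auto
    have "(b \<otimes> g) \<otimes> x \<otimes> inv (b \<otimes> g) = b \<otimes> (g \<otimes> x \<otimes> inv g) \<otimes> inv b"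
      using xc bg by (simp add: m_assoc inv_mult_group)
    then show "(b \<otimes> g) \<otimes> x \<otimes> inv (b \<otimes> g) = b \<otimes> x \<otimes> inv b"
      using gx[OF \<open>x \<in> S\<close>] by simp
  qed
  have e2: "\<forall>x\<in>S. inv (b \<otimes> g) \<otimes> x \<otimes> inv (inv (b \<otimes> g)) = inv b \<otimes> x \<otimes> inv (inv b)"
  proof
    fix x assume x: "x \<in> S"
    have "inv b \<otimes> x \<otimes> b \<in> S" using cl2 x by blast
    hence xc: "x \<in> carrier G" using S x by auto
    have "inv (b \<otimes> g) \<otimes> x \<otimes> inv (inv (b \<otimes> g)) = inv g \<otimes> (inv b \<otimes> x \<otimes> b) \<otimes> g"
      using xc bg by (simp add: m_assoc inv_mult_group)
    also have "\<dots> = inv b \<otimes> x \<otimes> b" using gx' \<open>inv b \<otimes> x \<otimes> b \<in> S\<close> by simp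
    finally show "inv (b \<otimes> g) \<otimes> x \<otimes> inv (inv (b \<otimes> g)) = inv b \<otimes> x \<otimes> inv (inv b)"
      using bg by simp
  qed
  have cl2': "\<forall>x\<in>S. inv b \<otimes> x \<otimes> inv (inv b) \<in> S" using cl2 bg by simp
  have bgc: "b \<otimes> g \<in> carrier G" using bg by simp
  show ?thesis
  proof (cases "n \<ge> 0")
    case True
    have "(b \<otimes> g) [^] nat n \<otimes> x \<otimes> inv ((b \<otimes> g) [^] nat n) = b [^] nat n \<otimes> x \<otimes> inv (b [^] nat n)"
      using conj_pow_nat[OF S bgc bg(1) e1 cl1, of "nat n"] x by blast
    moreover have eqs: "(b \<otimes> g) [^] nat n = (b \<otimes> g) [^] n" "b [^] nat n = b [^] n"
      by (rule pow_nat[OF True])+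
    ultimately show ?thesis by (simp only: eqs)
  next
    case False
    have 1: "(b \<otimes> g) [^] n = inv (b \<otimes> g) [^] nat (-n)" "b [^] n = inv b [^] nat (-n)"
      using False bg by (simp_all add: int_pow_def2[of _ n] nat_pow_inv int_pow_inv int_pow_neg)
    have "inv (b \<otimes> g) [^] nat (-n) \<otimes> x \<otimes> inv (inv (b \<otimes> g) [^] nat (-n)) = inv b [^] nat (-n) \<otimes> x \<otimes> inv (inv b [^] nat (-n))"
      using conj_pow_nat[OF S inv_closed[OF bgc] inv_closed[OF bg(1)] e2 cl2', of "nat (-n)"] x by blast
    then show ?thesis unfolding 1 .
  qed
qed

lemma (in group) cancel_l1 [simp]: "x \<in> carrier G \<Longrightarrow> y \<in> carrier G \<Longrightarrow> inv x \<otimes> (x \<otimes> y) = y"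
  by (simp add: m_assoc[symmetric])
lemma (in group) cancel_l2 [simp]: "x \<in> carrier G \<Longrightarrow> y \<in> carrier G \<Longrightarrow> x \<otimes> (inv x \<otimes> y) = y"
  by (simp add: m_assoc[symmetric])

lemma gen_lemma:
  assumes "group F" "dg \<in> hom F integer_group" "f1 \<in> carrier F" "dg f1 = 1"
    "subgroup T F" "\<forall>f\<in>carrier F. dg f = 0 \<longrightarrow> f \<in> T" "f1 \<in> T" "f \<in> carrier F"
  shows "f \<in> T"
proof -
  interpret F: group F by fact
  interpret D: group_hom F integer_group dg
    using assms(2) by (simp add: group_hom_def group_hom_axioms_def)
  define n where "n = dg f"
  define k where "k = f \<otimes>\<^bsub>F\<^esub> inv\<^bsub>F\<^esub> (f1 [^]\<^bsub>F\<^esub> n)"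
  have p: "f1 [^]\<^bsub>F\<^esub> n \<in> carrier F" using assms by simp
  have "dg (f1 [^]\<^bsub>F\<^esub> n) = n" using D.hom_int_pow[OF assms(3), of n] assms(4) by simp
  hence "dg k = 0" unfolding k_def using p assms(8) by (simp add: n_def)
  hence "k \<in> T" using assms(6,8) p k_def by simp
  moreover have "f1 [^]\<^bsub>F\<^esub> n \<in> T" using F.subgroup_int_pow_closed[OF assms(5,7)] .
  ultimately have "k \<otimes>\<^bsub>F\<^esub> f1 [^]\<^bsub>F\<^esub> n \<in> T" using subgroup.m_closed[OF assms(5)] by blast
  moreover have "k \<otimes>\<^bsub>F\<^esub> f1 [^]\<^bsub>F\<^esub> n = f" unfolding k_def using p assms(8) by (simp add: F.m_assoc)
  ultimately show ?thesis by simp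
qed

lemma existence:
  assumes F: "group F" and D: "dg \<in> hom F integer_group" and G: "group G" and phi: "\<phi> \<in> hom F G"
    and f1: "f1 \<in> carrier F" "dg f1 = 1" and g: "g \<in> carrier G"
    and cent: "g \<in> centraliser G (\<phi> ` {f \<in> carrier F. dg f = 0})"
  shows "\<exists>\<psi> \<in> hom F G. (\<forall>f\<in>carrier F. dg f = 0 \<longrightarrow> \<psi> f = \<phi> f)
                          \<and> \<psi> f1 = \<phi> f1 \<otimes>\<^bsub>G\<^esub> g"
proof -
  interpret F: group F by fact
  interpret G: group G by fact
  interpret D: group_hom F integer_group dg
    using D by (simp add: group_hom_def group_hom_axioms_def)
  interpret P: group_hom F G \<phi>
    using phi F G by (simp add: group_hom_def group_hom_axioms_def)
  define K where "K = {f \<in> carrier F. dg f = 0}"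
  define S where "S = \<phi> ` K"
  define b where "b = \<phi> f1"
  define a where "a = b \<otimes>\<^bsub>G\<^esub> g"
  have bc: "b \<in> carrier G" using f1 b_def by simp
  have ac: "a \<in> carrier G" using bc g a_def by simp
  have S: "S \<subseteq> carrier G" unfolding S_def K_def by auto
  have centS: "\<forall>x\<in>S. g \<otimes>\<^bsub>G\<^esub> x = x \<otimes>\<^bsub>G\<^esub> g"
    using cent unfolding centraliser_def S_def K_def by auto
  have cl1: "\<forall>x\<in>S. b \<otimes>\<^bsub>G\<^esub> x \<otimes>\<^bsub>G\<^esub> inv\<^bsub>G\<^esub> b \<in> S"
  proof
    fix x assume "x \<in> S"
    then obtain k where k: "k \<in> carrier F" "dg k = 0" "x = \<phi> k" unfolding S_def K_def by auto
    have "f1 \<otimes>\<^bsub>F\<^esub> k \<otimes>\<^bsub>F\<^esub> inv\<^bsub>F\<^esub> f1 \<in> K" using k f1 unfolding K_def by simp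
    moreover have "\<phi> (f1 \<otimes>\<^bsub>F\<^esub> k \<otimes>\<^bsub>F\<^esub> inv\<^bsub>F\<^esub> f1) = b \<otimes>\<^bsub>G\<^esub> x \<otimes>\<^bsub>G\<^esub> inv\<^bsub>G\<^esub> b"
      using k f1 b_def by simp
    ultimately show "b \<otimes>\<^bsub>G\<^esub> x \<otimes>\<^bsub>G\<^esub> inv\<^bsub>G\<^esub> b \<in> S" unfolding S_def by (metis image_eqI)
  qed
  have cl2: "\<forall>x\<in>S. inv\<^bsub>G\<^esub> b \<otimes>\<^bsub>G\<^esub> x \<otimes>\<^bsub>G\<^esub> b \<in> S"
  proof
    fix x assume "x \<in> S"
    then obtain k where k: "k \<in> carrier F" "dg k = 0" "x = \<phi> k" unfolding S_def K_def by auto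
    have "inv\<^bsub>F\<^esub> f1 \<otimes>\<^bsub>F\<^esub> k \<otimes>\<^bsub>F\<^esub> f1 \<in> K" using k f1 unfolding K_def by simp
    moreover have "\<phi> (inv\<^bsub>F\<^esub> f1 \<otimes>\<^bsub>F\<^esub> k \<otimes>\<^bsub>F\<^esub> f1) = inv\<^bsub>G\<^esub> b \<otimes>\<^bsub>G\<^esub> x \<otimes>\<^bsub>G\<^esub> b"
      using k f1 b_def by simp
    ultimately show "inv\<^bsub>G\<^esub> b \<otimes>\<^bsub>G\<^esub> x \<otimes>\<^bsub>G\<^esub> b \<in> S" unfolding S_def by (metis image_eqI)
  qed
  have key: "\<phi> (f1 [^]\<^bsub>F\<^esub> n \<otimes>\<^bsub>F\<^esub> k \<otimes>\<^bsub>F\<^esub> inv\<^bsub>F\<^esub> (f1 [^]\<^bsub>F\<^esub> n))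
      = a [^]\<^bsub>G\<^esub> n \<otimes>\<^bsub>G\<^esub> \<phi> k \<otimes>\<^bsub>G\<^esub> inv\<^bsub>G\<^esub> (a [^]\<^bsub>G\<^esub> n)" if k: "k \<in> K" for k and n :: int
  proof -
    have kc: "k \<in> carrier F" using k K_def by simp
    have "\<phi> (f1 [^]\<^bsub>F\<^esub> n \<otimes>\<^bsub>F\<^esub> k \<otimes>\<^bsub>F\<^esub> inv\<^bsub>F\<^esub> (f1 [^]\<^bsub>F\<^esub> n))
        = b [^]\<^bsub>G\<^esub> n \<otimes>\<^bsub>G\<^esub> \<phi> k \<otimes>\<^bsub>G\<^esub> inv\<^bsub>G\<^esub> (b [^]\<^bsub>G\<^esub> n)"
      using kc f1 by (simp add: P.hom_int_pow b_def)
    also have "\<dots> = a [^]\<^bsub>G\<^esub> n \<otimes>\<^bsub>G\<^esub> \<phi> k \<otimes>\<^bsub>G\<^esub> inv\<^bsub>G\<^esub> (a [^]\<^bsub>G\<^esub> n)"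
      unfolding a_def using G.conj_pow_int[OF S bc g centS cl1 cl2, of "\<phi> k" n] k S_def by simp
    finally show ?thesis .
  qed
  define \<psi> where "\<psi> f = \<phi> (f \<otimes>\<^bsub>F\<^esub> inv\<^bsub>F\<^esub> (f1 [^]\<^bsub>F\<^esub> dg f)) \<otimes>\<^bsub>G\<^esub> a [^]\<^bsub>G\<^esub> dg f" for f
  have hom: "\<psi> \<in> hom F G"
  proof (rule homI)
    fix x assume "x \<in> carrier F" then show "\<psi> x \<in> carrier G" using f1 ac by (simp add: \<psi>_def)
  next
    fix x y assume x: "x \<in> carrier F" and y: "y \<in> carrier F"
    define n where "n = dg x"
    define m where "m = dg y"
    have pn: "f1 [^]\<^bsub>F\<^esub> n \<in> carrier F" "f1 [^]\<^bsub>F\<^esub> m \<in> carrier F" using f1 by auto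
    define k where "k = x \<otimes>\<^bsub>F\<^esub> inv\<^bsub>F\<^esub> (f1 [^]\<^bsub>F\<^esub> n)"
    define k' where "k' = y \<otimes>\<^bsub>F\<^esub> inv\<^bsub>F\<^esub> (f1 [^]\<^bsub>F\<^esub> m)"
    have kc: "k \<in> carrier F" "k' \<in> carrier F" using x y pn k_def k'_def by auto
    have dgp: "dg (f1 [^]\<^bsub>F\<^esub> i) = i" for i :: int using D.hom_int_pow[OF f1(1), of i] f1 by simp
    have "k' \<in> K" unfolding K_def k'_def using y pn dgp[of m] by (simp add: m_def)
    have dxy: "dg (x \<otimes>\<^bsub>F\<^esub> y) = n + m" using x y by (simp add: n_def m_def)
    have e1: "x \<otimes>\<^bsub>F\<^esub> y \<otimes>\<^bsub>F\<^esub> inv\<^bsub>F\<^esub> (f1 [^]\<^bsub>F\<^esub> (n + m))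
       = k \<otimes>\<^bsub>F\<^esub> (f1 [^]\<^bsub>F\<^esub> n \<otimes>\<^bsub>F\<^esub> k' \<otimes>\<^bsub>F\<^esub> inv\<^bsub>F\<^esub> (f1 [^]\<^bsub>F\<^esub> n))"
      unfolding k_def k'_def using x y pn f1 by (simp add: F.int_pow_mult F.inv_mult_group F.m_assoc)
    have "\<psi> (x \<otimes>\<^bsub>F\<^esub> y) = \<phi> k \<otimes>\<^bsub>G\<^esub> (a [^]\<^bsub>G\<^esub> n \<otimes>\<^bsub>G\<^esub> \<phi> k' \<otimes>\<^bsub>G\<^esub> inv\<^bsub>G\<^esub> (a [^]\<^bsub>G\<^esub> n)) \<otimes>\<^bsub>G\<^esub> a [^]\<^bsub>G\<^esub> (n + m)"
      unfolding \<psi>_def dxy e1 using kc pn key[OF \<open>k' \<in> K\<close>] by simp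
    also have "\<dots> = \<phi> k \<otimes>\<^bsub>G\<^esub> a [^]\<^bsub>G\<^esub> n \<otimes>\<^bsub>G\<^esub> (\<phi> k' \<otimes>\<^bsub>G\<^esub> a [^]\<^bsub>G\<^esub> m)"
      using kc ac by (simp add: G.int_pow_mult G.m_assoc)
    also have "\<dots> = \<psi> x \<otimes>\<^bsub>G\<^esub> \<psi> y" unfolding \<psi>_def k_def k'_def n_def m_def ..
    finally show "\<psi> (x \<otimes>\<^bsub>F\<^esub> y) = \<psi> x \<otimes>\<^bsub>G\<^esub> \<psi> y" .
  qed
  have "\<forall>f\<in>carrier F. dg f = 0 \<longrightarrow> \<psi> f = \<phi> f" by (simp add: \<psi>_def)
  moreover have "\<psi> f1 = \<phi> f1 \<otimes>\<^bsub>G\<^esub> g" using f1 ac by (simp add: \<psi>_def a_def b_def)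
  ultimately show ?thesis using hom by blast
qed

lemma necessity:
  assumes F: "group F" and D: "dg \<in> hom F integer_group" and G: "group G" and phi: "\<phi> \<in> hom F G"
    and f1: "f1 \<in> carrier F" "dg f1 = 1" and g: "g \<in> carrier G"
    and psi: "\<psi> \<in> hom F G" "\<forall>f\<in>carrier F. dg f = 0 \<longrightarrow> \<psi> f = \<phi> f" "\<psi> f1 = \<phi> f1 \<otimes>\<^bsub>G\<^esub> g"
  shows "g \<in> centraliser G (\<phi> ` {f \<in> carrier F. dg f = 0})"
proof -
  interpret F: group F by fact
  interpret G: group G by fact
  interpret D: group_hom F integer_group dg
    using D by (simp add: group_hom_def group_hom_axioms_def)
  interpret P: group_hom F G \<phi>
    using phi F G by (simp add: group_hom_def group_hom_axioms_def)
  interpret Q: group_hom F G \<psi>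
    using psi(1) F G by (simp add: group_hom_def group_hom_axioms_def)
  define b where "b = \<phi> f1"
  have bc: "b \<in> carrier G" using f1 b_def by simp
  have cx: "g \<otimes>\<^bsub>G\<^esub> x = x \<otimes>\<^bsub>G\<^esub> g" if xin: "x \<in> \<phi> ` {f \<in> carrier F. dg f = 0}" for x
  proof -
    obtain k0 where k0: "k0 \<in> {f \<in> carrier F. dg f = 0}" "x = \<phi> k0" using xin by (rule imageE)
    obtain k where k: "k \<in> carrier F" "dg k = 0" "x = \<phi> k" using k0 by blast
    have xc: "x \<in> carrier G" using k by simp
    define k' where "k' = f1 \<otimes>\<^bsub>F\<^esub> k \<otimes>\<^bsub>F\<^esub> inv\<^bsub>F\<^esub> f1"
    have k'c: "k' \<in> carrier F" "dg k' = 0" using k f1 k'_def by auto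
    have "\<psi> k' = \<psi> f1 \<otimes>\<^bsub>G\<^esub> \<psi> k \<otimes>\<^bsub>G\<^esub> inv\<^bsub>G\<^esub> (\<psi> f1)"
      unfolding k'_def using k f1 by (simp only: Q.hom_mult Q.hom_inv F.m_closed F.inv_closed)
    also have "\<psi> k = x" using psi(2) k by simp
    finally have A1: "\<psi> k' = (b \<otimes>\<^bsub>G\<^esub> g) \<otimes>\<^bsub>G\<^esub> x \<otimes>\<^bsub>G\<^esub> inv\<^bsub>G\<^esub> (b \<otimes>\<^bsub>G\<^esub> g)"
      unfolding b_def psi(3) .
    have "\<phi> k' = \<phi> f1 \<otimes>\<^bsub>G\<^esub> \<phi> k \<otimes>\<^bsub>G\<^esub> inv\<^bsub>G\<^esub> (\<phi> f1)"
      unfolding k'_def using k f1 by (simp only: P.hom_mult P.hom_inv F.m_closed F.inv_closed)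
    hence A2: "\<psi> k' = b \<otimes>\<^bsub>G\<^esub> x \<otimes>\<^bsub>G\<^esub> inv\<^bsub>G\<^esub> b"
      using psi(2) k'c k(3) unfolding b_def by simp
    from A1 A2
    have eq1: "(b \<otimes>\<^bsub>G\<^esub> g) \<otimes>\<^bsub>G\<^esub> x \<otimes>\<^bsub>G\<^esub> inv\<^bsub>G\<^esub> (b \<otimes>\<^bsub>G\<^esub> g) = b \<otimes>\<^bsub>G\<^esub> x \<otimes>\<^bsub>G\<^esub> inv\<^bsub>G\<^esub> b"
      by simp
    have "g \<otimes>\<^bsub>G\<^esub> x \<otimes>\<^bsub>G\<^esub> inv\<^bsub>G\<^esub> g = inv\<^bsub>G\<^esub> b \<otimes>\<^bsub>G\<^esub> ((b \<otimes>\<^bsub>G\<^esub> g) \<otimes>\<^bsub>G\<^esub> x \<otimes>\<^bsub>G\<^esub> inv\<^bsub>G\<^esub> (b \<otimes>\<^bsub>G\<^esub> g)) \<otimes>\<^bsub>G\<^esub> b"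
      using bc g xc by (simp add: G.m_assoc G.inv_mult_group)
    also have "\<dots> = x" unfolding eq1 using bc xc by (simp add: G.m_assoc)
    finally have e: "g \<otimes>\<^bsub>G\<^esub> x \<otimes>\<^bsub>G\<^esub> inv\<^bsub>G\<^esub> g = x" .
    have "g \<otimes>\<^bsub>G\<^esub> x = (g \<otimes>\<^bsub>G\<^esub> x \<otimes>\<^bsub>G\<^esub> inv\<^bsub>G\<^esub> g) \<otimes>\<^bsub>G\<^esub> g"
      using g xc by (simp add: G.m_assoc)
    then show ?thesis unfolding e .
  qed
  show ?thesis unfolding centraliser_def using g cx by simp
qed

lemma uniqueness:
  assumes F: "group F" and D: "dg \<in> hom F integer_group" and G: "group G"
    and f1: "f1 \<in> carrier F" "dg f1 = 1"
    and p1: "\<psi>1 \<in> hom F G" and p2: "\<psi>2 \<in> hom F G"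
    and e0: "\<forall>f\<in>carrier F. dg f = 0 \<longrightarrow> \<psi>1 f = \<psi>2 f" and e1: "\<psi>1 f1 = \<psi>2 f1"
    and f: "f \<in> carrier F"
  shows "\<psi>1 f = \<psi>2 f"
proof -
  interpret F: group F by fact
  interpret G: group G by fact
  interpret Q1: group_hom F G \<psi>1
    using p1 F G by (simp add: group_hom_def group_hom_axioms_def)
  interpret Q2: group_hom F G \<psi>2
    using p2 F G by (simp add: group_hom_def group_hom_axioms_def)
  define T where "T = {f \<in> carrier F. \<psi>1 f = \<psi>2 f}"
  have "subgroup T F"
    by (rule F.subgroupI) (auto simp: T_def)
  then have "f \<in> T" using gen_lemma[OF F D f1 _ _ _ f, of T] e0 e1 f1 unfolding T_def by auto
  then show ?thesis unfolding T_def by simp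
qed

lemma coset_part:
  assumes F: "group F" and D: "dg \<in> hom F integer_group" and G: "group G" and phi: "\<phi> \<in> hom F G"
    and f1: "f1 \<in> carrier F" "dg f1 = 1" and g: "g \<in> carrier G"
    and psi: "\<psi> \<in> hom F G" "\<forall>f\<in>carrier F. dg f = 0 \<longrightarrow> \<psi> f = \<phi> f" "\<psi> f1 = \<phi> f1 \<otimes>\<^bsub>G\<^esub> g"
    and H: "subgroup H G" and core: "\<forall>y\<in>carrier F. g \<in> conj_subgroup G H (\<phi> y)"
    and f: "f \<in> carrier F"
  shows "\<psi> f <#\<^bsub>G\<^esub> H = \<phi> f <#\<^bsub>G\<^esub> H"
proof -
  interpret F: group F by fact
  interpret G: group G by fact
  interpret P: group_hom F G \<phi>
    using phi F G by (simp add: group_hom_def group_hom_axioms_def)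
  interpret Q: group_hom F G \<psi>
    using psi(1) F G by (simp add: group_hom_def group_hom_axioms_def)
  have hc: "\<And>h. h \<in> H \<Longrightarrow> h \<in> carrier G" by (rule subgroup.mem_carrier[OF H])
  have conjH: "\<phi> y \<otimes>\<^bsub>G\<^esub> g \<otimes>\<^bsub>G\<^esub> inv\<^bsub>G\<^esub> (\<phi> y) \<in> H" if y: "y \<in> carrier F" for y
  proof -
    obtain h where h: "h \<in> H" "g = inv\<^bsub>G\<^esub> (\<phi> y) \<otimes>\<^bsub>G\<^esub> h \<otimes>\<^bsub>G\<^esub> \<phi> y"
    proof -
      have "g \<in> conj_subgroup G H (\<phi> y)" using core y by (rule bspec)
      hence "\<exists>h. g = inv\<^bsub>G\<^esub> (\<phi> y) \<otimes>\<^bsub>G\<^esub> h \<otimes>\<^bsub>G\<^esub> \<phi> y \<and> h \<in> H"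
        unfolding conj_subgroup_def by (rule CollectD)
      then show ?thesis using that by blast
    qed
    have "\<phi> y \<otimes>\<^bsub>G\<^esub> g \<otimes>\<^bsub>G\<^esub> inv\<^bsub>G\<^esub> (\<phi> y) = h"
      using h hc[of h] y by (simp add: G.m_assoc)
    then show ?thesis using h by simp
  qed
  define c where "c f = inv\<^bsub>G\<^esub> (\<phi> f) \<otimes>\<^bsub>G\<^esub> \<psi> f" for f
  define T where "T = {f \<in> carrier F. \<forall>y\<in>carrier F. \<phi> y \<otimes>\<^bsub>G\<^esub> c f \<otimes>\<^bsub>G\<^esub> inv\<^bsub>G\<^esub> (\<phi> y) \<in> H}"
  have sub: "subgroup T F"
  proof (rule F.subgroupI)
    show "T \<subseteq> carrier F" unfolding T_def by auto
  next
    have "\<one>\<^bsub>F\<^esub> \<in> T" unfolding T_def c_def using subgroup.one_closed[OF H] by simp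
    then show "T \<noteq> {}" by auto
  next
    fix x assume x: "x \<in> T"
    hence xc: "x \<in> carrier F" unfolding T_def by simp
    have "\<phi> y \<otimes>\<^bsub>G\<^esub> c (inv\<^bsub>F\<^esub> x) \<otimes>\<^bsub>G\<^esub> inv\<^bsub>G\<^esub> (\<phi> y) \<in> H" if y: "y \<in> carrier F" for y
    proof -
      have "\<phi> y \<otimes>\<^bsub>G\<^esub> c (inv\<^bsub>F\<^esub> x) \<otimes>\<^bsub>G\<^esub> inv\<^bsub>G\<^esub> (\<phi> y)
          = inv\<^bsub>G\<^esub> (\<phi> (y \<otimes>\<^bsub>F\<^esub> x) \<otimes>\<^bsub>G\<^esub> c x \<otimes>\<^bsub>G\<^esub> inv\<^bsub>G\<^esub> (\<phi> (y \<otimes>\<^bsub>F\<^esub> x)))"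
        using xc y unfolding c_def by (simp add: G.m_assoc G.inv_mult_group)
      moreover have "\<phi> (y \<otimes>\<^bsub>F\<^esub> x) \<otimes>\<^bsub>G\<^esub> c x \<otimes>\<^bsub>G\<^esub> inv\<^bsub>G\<^esub> (\<phi> (y \<otimes>\<^bsub>F\<^esub> x)) \<in> H"
        using x y xc unfolding T_def by blast
      ultimately show ?thesis using subgroup.m_inv_closed[OF H] by simp
    qed
    then show "inv\<^bsub>F\<^esub> x \<in> T" unfolding T_def using xc by simp
  next
    fix x z assume x: "x \<in> T" and z: "z \<in> T"
    hence xc: "x \<in> carrier F" and zc: "z \<in> carrier F" unfolding T_def by auto
    have "\<phi> y \<otimes>\<^bsub>G\<^esub> c (x \<otimes>\<^bsub>F\<^esub> z) \<otimes>\<^bsub>G\<^esub> inv\<^bsub>G\<^esub> (\<phi> y) \<in> H" if y: "y \<in> carrier F" for y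
    proof -
      have "\<phi> y \<otimes>\<^bsub>G\<^esub> c (x \<otimes>\<^bsub>F\<^esub> z) \<otimes>\<^bsub>G\<^esub> inv\<^bsub>G\<^esub> (\<phi> y)
          = (\<phi> (y \<otimes>\<^bsub>F\<^esub> inv\<^bsub>F\<^esub> z) \<otimes>\<^bsub>G\<^esub> c x \<otimes>\<^bsub>G\<^esub> inv\<^bsub>G\<^esub> (\<phi> (y \<otimes>\<^bsub>F\<^esub> inv\<^bsub>F\<^esub> z)))
            \<otimes>\<^bsub>G\<^esub> (\<phi> y \<otimes>\<^bsub>G\<^esub> c z \<otimes>\<^bsub>G\<^esub> inv\<^bsub>G\<^esub> (\<phi> y))"
        using xc zc y unfolding c_def by (simp add: G.m_assoc G.inv_mult_group)
      moreover have "\<phi> (y \<otimes>\<^bsub>F\<^esub> inv\<^bsub>F\<^esub> z) \<otimes>\<^bsub>G\<^esub> c x \<otimes>\<^bsub>G\<^esub> inv\<^bsub>G\<^esub> (\<phi> (y \<otimes>\<^bsub>F\<^esub> inv\<^bsub>F\<^esub> z)) \<in> H"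
        using x y zc unfolding T_def by blast
      moreover have "\<phi> y \<otimes>\<^bsub>G\<^esub> c z \<otimes>\<^bsub>G\<^esub> inv\<^bsub>G\<^esub> (\<phi> y) \<in> H"
        using z y unfolding T_def by blast
      ultimately show ?thesis using subgroup.m_closed[OF H] by simp
    qed
    then show "x \<otimes>\<^bsub>F\<^esub> z \<in> T" unfolding T_def using xc zc by simp
  qed
  have K: "\<forall>f\<in>carrier F. dg f = 0 \<longrightarrow> f \<in> T"
    unfolding T_def c_def using psi(2) subgroup.one_closed[OF H] by simp
  have "c f1 = g" unfolding c_def using psi(3) f1 g by (simp add: G.m_assoc[symmetric])
  hence "f1 \<in> T" unfolding T_def using conjH f1 by simp
  have "f \<in> T" using gen_lemma[OF F D f1 sub K \<open>f1 \<in> T\<close> f] .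
  hence "\<phi> \<one>\<^bsub>F\<^esub> \<otimes>\<^bsub>G\<^esub> c f \<otimes>\<^bsub>G\<^esub> inv\<^bsub>G\<^esub> (\<phi> \<one>\<^bsub>F\<^esub>) \<in> H"
    unfolding T_def using F.one_closed by blast
  hence cH: "c f \<in> H" using f unfolding c_def by simp
  have "\<psi> f = \<phi> f \<otimes>\<^bsub>G\<^esub> c f" unfolding c_def using f by simp
  hence "\<psi> f <#\<^bsub>G\<^esub> H = \<phi> f <#\<^bsub>G\<^esub> (c f <#\<^bsub>G\<^esub> H)"
    using f hc cH by (simp add: G.lcos_m_assoc subset_iff)
  also have "\<dots> = \<phi> f <#\<^bsub>G\<^esub> H" using G.coset_join3[OF hc[OF cH] H cH] by simp
  finally show ?thesis .
qed

theorem lemma0: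
  fixes F :: "('c, 'd) monoid_scheme" and G :: "('a, 'b) monoid_scheme"
    and dg :: "'c \<Rightarrow> int" and \<phi> :: "'c \<Rightarrow> 'a"
  assumes "indexed_group F dg"
    and "group G"
    and "\<phi> \<in> hom F G"
    and "f1 \<in> carrier F" and "dg f1 = 1"
    and "g \<in> carrier G"
  shows "((\<exists>\<psi> \<in> hom F G. (\<forall>f\<in>carrier F. dg f = 0 \<longrightarrow> \<psi> f = \<phi> f)
                          \<and> \<psi> f1 = \<phi> f1 \<otimes>\<^bsub>G\<^esub> g)
          \<longleftrightarrow> g \<in> centraliser G (\<phi> ` {f \<in> carrier F. dg f = 0}))
       \<and> (\<forall>\<psi>1 \<in> hom F G. \<forall>\<psi>2 \<in> hom F G.
            (\<forall>f\<in>carrier F. dg f = 0 \<longrightarrow> \<psi>1 f = \<phi> f) \<and> \<psi>1 f1 = \<phi> f1 \<otimes>\<^bsub>G\<^esub> g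
          \<and> (\<forall>f\<in>carrier F. dg f = 0 \<longrightarrow> \<psi>2 f = \<phi> f) \<and> \<psi>2 f1 = \<phi> f1 \<otimes>\<^bsub>G\<^esub> g
          \<longrightarrow> (\<forall>f\<in>carrier F. \<psi>1 f = \<psi>2 f))
       \<and> (\<forall>H. subgroup H G \<and> g \<in> phi_core F dg G \<phi> H \<longrightarrow>
            (\<exists>\<psi> \<in> hom F G. (\<forall>f\<in>carrier F. dg f = 0 \<longrightarrow> \<psi> f = \<phi> f)
                          \<and> \<psi> f1 = \<phi> f1 \<otimes>\<^bsub>G\<^esub> g
                          \<and> (\<forall>f\<in>carrier F. \<psi> f <#\<^bsub>G\<^esub> H = \<phi> f <#\<^bsub>G\<^esub> H)))"
proof -
  have F: "group F" and D: "dg \<in> hom F integer_group"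
    using assms(1) unfolding indexed_group_def by auto
  note G = assms(2) and phi = assms(3) and f1 = assms(4,5) and g = assms(6)
  have P1: "(\<exists>\<psi> \<in> hom F G. (\<forall>f\<in>carrier F. dg f = 0 \<longrightarrow> \<psi> f = \<phi> f)
                          \<and> \<psi> f1 = \<phi> f1 \<otimes>\<^bsub>G\<^esub> g)
          \<longleftrightarrow> g \<in> centraliser G (\<phi> ` {f \<in> carrier F. dg f = 0})"
  proof
    assume "\<exists>\<psi> \<in> hom F G. (\<forall>f\<in>carrier F. dg f = 0 \<longrightarrow> \<psi> f = \<phi> f) \<and> \<psi> f1 = \<phi> f1 \<otimes>\<^bsub>G\<^esub> g"
    then obtain \<psi> where "\<psi> \<in> hom F G" "\<forall>f\<in>carrier F. dg f = 0 \<longrightarrow> \<psi> f = \<phi> f" "\<psi> f1 = \<phi> f1 \<otimes>\<^bsub>G\<^esub> g"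
      by blast
    then show "g \<in> centraliser G (\<phi> ` {f \<in> carrier F. dg f = 0})"
      using necessity[OF F D G phi f1 g] by blast
  next
    assume "g \<in> centraliser G (\<phi> ` {f \<in> carrier F. dg f = 0})"
    then show "\<exists>\<psi> \<in> hom F G. (\<forall>f\<in>carrier F. dg f = 0 \<longrightarrow> \<psi> f = \<phi> f) \<and> \<psi> f1 = \<phi> f1 \<otimes>\<^bsub>G\<^esub> g"
      using existence[OF F D G phi f1 g] by blast
  qed
  have P2: "\<forall>\<psi>1 \<in> hom F G. \<forall>\<psi>2 \<in> hom F G.
            (\<forall>f\<in>carrier F. dg f = 0 \<longrightarrow> \<psi>1 f = \<phi> f) \<and> \<psi>1 f1 = \<phi> f1 \<otimes>\<^bsub>G\<^esub> g
          \<and> (\<forall>f\<in>carrier F. dg f = 0 \<longrightarrow> \<psi>2 f = \<phi> f) \<and> \<psi>2 f1 = \<phi> f1 \<otimes>\<^bsub>G\<^esub> g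
          \<longrightarrow> (\<forall>f\<in>carrier F. \<psi>1 f = \<psi>2 f)"
  proof (intro ballI impI)
    fix \<psi>1 \<psi>2 f
    assume p1: "\<psi>1 \<in> hom F G" and p2: "\<psi>2 \<in> hom F G" and f: "f \<in> carrier F"
      and c: "(\<forall>f\<in>carrier F. dg f = 0 \<longrightarrow> \<psi>1 f = \<phi> f) \<and> \<psi>1 f1 = \<phi> f1 \<otimes>\<^bsub>G\<^esub> g
          \<and> (\<forall>f\<in>carrier F. dg f = 0 \<longrightarrow> \<psi>2 f = \<phi> f) \<and> \<psi>2 f1 = \<phi> f1 \<otimes>\<^bsub>G\<^esub> g"
    have e0: "\<forall>f\<in>carrier F. dg f = 0 \<longrightarrow> \<psi>1 f = \<psi>2 f" using c by simp
    have e1: "\<psi>1 f1 = \<psi>2 f1" using c by simp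
    show "\<psi>1 f = \<psi>2 f" by (rule uniqueness[OF F D G f1 p1 p2 e0 e1 f])
  qed
  have P3: "\<forall>H. subgroup H G \<and> g \<in> phi_core F dg G \<phi> H \<longrightarrow>
            (\<exists>\<psi> \<in> hom F G. (\<forall>f\<in>carrier F. dg f = 0 \<longrightarrow> \<psi> f = \<phi> f)
                          \<and> \<psi> f1 = \<phi> f1 \<otimes>\<^bsub>G\<^esub> g
                          \<and> (\<forall>f\<in>carrier F. \<psi> f <#\<^bsub>G\<^esub> H = \<phi> f <#\<^bsub>G\<^esub> H))"
  proof (intro allI impI)
    fix H assume a: "subgroup H G \<and> g \<in> phi_core F dg G \<phi> H"
    have H: "subgroup H G" using a by simp
    have core: "\<forall>y\<in>carrier F. g \<in> conj_subgroup G H (\<phi> y)"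
      using a unfolding phi_core_def by blast
    have eqs: "{\<phi> f | f. f \<in> carrier F \<and> dg f = 0} = \<phi> ` {f \<in> carrier F. dg f = 0}" by blast
    have "g \<in> centraliser G (\<phi> ` {f \<in> carrier F. dg f = 0})"
      using a unfolding phi_core_def eqs by blast
    then obtain \<psi> where psi: "\<psi> \<in> hom F G" "\<forall>f\<in>carrier F. dg f = 0 \<longrightarrow> \<psi> f = \<phi> f" "\<psi> f1 = \<phi> f1 \<otimes>\<^bsub>G\<^esub> g"
      using existence[OF F D G phi f1 g] by blast
    have "\<forall>f\<in>carrier F. \<psi> f <#\<^bsub>G\<^esub> H = \<phi> f <#\<^bsub>G\<^esub> H"
      using coset_part[OF F D G phi f1 g psi H core] by blast
    then show "\<exists>\<psi> \<in> hom F G. (\<forall>f\<in>carrier F. dg f = 0 \<longrightarrow> \<psi> f = \<phi> f)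
                          \<and> \<psi> f1 = \<phi> f1 \<otimes>\<^bsub>G\<^esub> g
                          \<and> (\<forall>f\<in>carrier F. \<psi> f <#\<^bsub>G\<^esub> H = \<phi> f <#\<^bsub>G\<^esub> H)"
      using psi by blast
  qed
  show ?thesis using P1 P2 P3 by blast
qed

end
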